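(* If a $3$-connected graph has a mixed bicycle, then it is $K_{2,3}$-based.
   Context: A mixed bicycle in a graph is a pair $(Q_o,Q_e)$ of vertex-disjoint cycles where $Q_o$ has odd length and $Q_e$ has even length at least four. To bisubdivide an edge is to subdivide it by inserting an even number of new vertices; a bisubdivision of $K$ is obtained by bisubdividing some (possibly none) of its edges. A graph is $K_{2,3}$-based if it contains a subgraph that is a bisubdivision of $K_{2,3}$. *)

theory Defs
  imports Main
begin

definition graph :: "'a set \<Rightarrow> 'a set set \<Rightarrow> bool" where
  "graph V E \<longleftrightarrow> finite V \<and> (\<forall>e\<in>E. \<exists>u v. e = {u, v} \<and> u \<noteq> v \<and> u \<in> V \<and> v \<in> V)"

definition is_path :: "'a set \<Rightarrow> 'a set set \<Rightarrow> 'a list \<Rightarrow> bool" where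
  "is_path V E p \<longleftrightarrow> p \<noteq> [] \<and> distinct p \<and> set p \<subseteq> V \<and>
     (\<forall>i. Suc i < length p \<longrightarrow> {p ! i, p ! Suc i} \<in> E)"

definition path_len :: "'a list \<Rightarrow> nat" where
  "path_len p = length p - 1"

definition internal :: "'a list \<Rightarrow> 'a set" where
  "internal p = set (butlast (tl p))"

definition connected_on :: "'a set \<Rightarrow> 'a set set \<Rightarrow> 'a set \<Rightarrow> bool" where
  "connected_on V E W \<longleftrightarrow> (\<forall>u\<in>W. \<forall>v\<in>W. \<exists>p. is_path V E p \<and> set p \<subseteq> W \<and> hd p = u \<and> last p = v)"

definition three_connected :: "'a set \<Rightarrow> 'a set set \<Rightarrow> bool" where
  "three_connected V E \<longleftrightarrow> card V > 3 \<and>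
     (\<forall>S. S \<subseteq> V \<and> card S < 3 \<longrightarrow> connected_on V E (V - S))"

text \<open>A cycle is given by a list [v0,...,v(k-1)] of k \<ge> 3 distinct vertices with
  consecutive vertices adjacent and v(k-1) adjacent to v0; its length is k.\<close>
definition is_cycle :: "'a set \<Rightarrow> 'a set set \<Rightarrow> 'a list \<Rightarrow> bool" where
  "is_cycle V E c \<longleftrightarrow> length c \<ge> 3 \<and> is_path V E c \<and> {last c, hd c} \<in> E"

definition mixed_bicycle :: "'a set \<Rightarrow> 'a set set \<Rightarrow> 'a list \<Rightarrow> 'a list \<Rightarrow> bool" where
  "mixed_bicycle V E Qo Qe \<longleftrightarrow> is_cycle V E Qo \<and> is_cycle V E Qe \<and>
     set Qo \<inter> set Qe = {} \<and> odd (length Qo) \<and> even (length Qe) \<and> length Qe \<ge> 4"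

definition has_mixed_bicycle :: "'a set \<Rightarrow> 'a set set \<Rightarrow> bool" where
  "has_mixed_bicycle V E \<longleftrightarrow> (\<exists>Qo Qe. mixed_bicycle V E Qo Qe)"

text \<open>G contains a subgraph that is a bisubdivision of the graph K = (VK, EK):
  the vertices of K are mapped injectively (f) to vertices of G, and every edge {u,v}
  of K is replaced by a path P e of G joining f u and f v of odd length
  (i.e. the edge is subdivided by an even number of new vertices); the new
  (internal) vertices of distinct paths are disjoint and avoid f ` VK.\<close>
definition contains_bisubdivision ::
  "'a set \<Rightarrow> 'a set set \<Rightarrow> 'b set \<Rightarrow> 'b set set \<Rightarrow> bool" where
  "contains_bisubdivision V E VK EK \<longleftrightarrow>
     (\<exists>f P. inj_on f VK \<and> f ` VK \<subseteq> V \<and>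
        (\<forall>e\<in>EK. is_path V E (P e) \<and> {hd (P e), last (P e)} = f ` e \<and> odd (path_len (P e))
                 \<and> internal (P e) \<inter> f ` VK = {}) \<and>
        (\<forall>e\<in>EK. \<forall>e'\<in>EK. e \<noteq> e' \<longrightarrow> internal (P e) \<inter> internal (P e') = {}))"

definition K23_V :: "nat set" where "K23_V = {0,1,2,3,4}"
definition K23_E :: "nat set set" where
  "K23_E = {{i, j} | i j. i \<in> {0,1} \<and> j \<in> {2,3,4}}"

definition K23_based :: "'a set \<Rightarrow> 'a set set \<Rightarrow> bool" where
  "K23_based V E \<longleftrightarrow> contains_bisubdivision V E K23_V K23_E"

end

theory Submission
  imports Defs
begin

fun adjl :: "'a set set \<Rightarrow> 'a list \<Rightarrow> bool" where
  "adjl E (x # y # xs) = ({x, y} \<in> E \<and> adjl E (y # xs))"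
| "adjl E _ = True"

lemma adjl_nth: "adjl E p \<longleftrightarrow> (\<forall>i. Suc i < length p \<longrightarrow> {p ! i, p ! Suc i} \<in> E)"
proof (induction E p rule: adjl.induct)
  case (1 E x y xs)
  show ?case
  proof
    assume "adjl E (x # y # xs)"
    then show "\<forall>i. Suc i < length (x # y # xs) \<longrightarrow> {(x # y # xs) ! i, (x # y # xs) ! Suc i} \<in> E"
      using 1 by (auto simp: nth_Cons split: nat.splits)
  next
    assume H: "\<forall>i. Suc i < length (x # y # xs) \<longrightarrow> {(x # y # xs) ! i, (x # y # xs) ! Suc i} \<in> E"
    have "{x,y} \<in> E" using H[rule_format, of 0] by simp
    moreover have "\<forall>i. Suc i < length (y # xs) \<longrightarrow> {(y # xs) ! i, (y # xs) ! Suc i} \<in> E"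
      using H by (metis Suc_less_eq length_Cons nth_Cons_Suc)
    ultimately show "adjl E (x # y # xs)" using 1 by simp
  qed
qed auto

lemma is_path_adjl: "is_path V E p \<longleftrightarrow> p \<noteq> [] \<and> distinct p \<and> set p \<subseteq> V \<and> adjl E p"
  unfolding is_path_def adjl_nth by blast

lemma adjl_Cons: "adjl E (x # xs) \<longleftrightarrow> adjl E xs \<and> (xs \<noteq> [] \<longrightarrow> {x, hd xs} \<in> E)"
  by (cases xs) auto

lemma adjl_append: "adjl E (xs @ ys) \<longleftrightarrow> adjl E xs \<and> adjl E ys \<and> (xs \<noteq> [] \<longrightarrow> ys \<noteq> [] \<longrightarrow> {last xs, hd ys} \<in> E)"
  by (induction xs) (auto simp: adjl_Cons)

lemma adjl_rev: "adjl E (rev xs) = adjl E xs"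
  by (induction xs) (auto simp: adjl_append adjl_Cons hd_rev last_rev insert_commute)

lemma adjl_mono: "adjl E xs \<Longrightarrow> E \<subseteq> E' \<Longrightarrow> adjl E' xs"
  by (induction E xs rule: adjl.induct) auto

lemma adjl_take: "adjl E xs \<Longrightarrow> adjl E (take n xs)"
  using adjl_append[of E "take n xs" "drop n xs"] by simp

lemma adjl_drop: "adjl E xs \<Longrightarrow> adjl E (drop n xs)"
  using adjl_append[of E "take n xs" "drop n xs"] by simp

lemma adjl_tl: "adjl E xs \<Longrightarrow> adjl E (tl xs)"
  by (cases xs) (auto simp: adjl_Cons)

lemma adjl_butlast: "adjl E xs \<Longrightarrow> adjl E (butlast xs)"
  using adjl_take[of E xs "length xs - 1"] by (simp add: butlast_conv_take)

definition jn :: "'a list \<Rightarrow> 'a list \<Rightarrow> 'a list" where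
  "jn xs ys = xs @ tl ys"

lemma jn_set: "xs \<noteq> [] \<Longrightarrow> ys \<noteq> [] \<Longrightarrow> last xs = hd ys \<Longrightarrow> set (jn xs ys) = set xs \<union> set ys"
  by (cases ys) (auto simp: jn_def)

lemma jn_hd: "xs \<noteq> [] \<Longrightarrow> hd (jn xs ys) = hd xs"
  unfolding jn_def by simp

lemma jn_last: "xs \<noteq> [] \<Longrightarrow> ys \<noteq> [] \<Longrightarrow> last xs = hd ys \<Longrightarrow> last (jn xs ys) = last ys"
  by (cases ys) (auto simp: jn_def)

lemma jn_length: "ys \<noteq> [] \<Longrightarrow> length (jn xs ys) = length xs + length ys - 1"
  unfolding jn_def by (cases ys) auto

lemma jn_adjl: "xs \<noteq> [] \<Longrightarrow> last xs = hd ys \<Longrightarrow> adjl E xs \<Longrightarrow> adjl E ys \<Longrightarrow> adjl E (jn xs ys)"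
  unfolding jn_def
  by (cases ys; cases "tl ys") (auto simp: adjl_append adjl_Cons)

lemma jn_distinct: "xs \<noteq> [] \<Longrightarrow> ys \<noteq> [] \<Longrightarrow> last xs = hd ys \<Longrightarrow> distinct xs \<Longrightarrow> distinct ys \<Longrightarrow>
   set xs \<inter> set ys \<subseteq> {hd ys} \<Longrightarrow> distinct (jn xs ys)"
  unfolding jn_def by (cases ys) auto

lemma distinct_last_butlast: "distinct xs \<Longrightarrow> xs \<noteq> [] \<Longrightarrow> last xs \<notin> set (butlast xs)"
  by (induction xs) (auto dest: in_set_butlastD)

lemma distinct_hd_tl: "distinct xs \<Longrightarrow> hd xs \<notin> set (tl xs)"
  by (cases xs) auto

lemma first_hit: "set w \<inter> X \<noteq> {} \<Longrightarrow> \<exists>w1 w2. w = w1 @ w2 \<and> w1 \<noteq> [] \<and> last w1 \<in> X \<and> set (butlast w1) \<inter> X = {}"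
proof (induction w)
  case Nil then show ?case by simp
next
  case (Cons x w)
  show ?case
  proof (cases "x \<in> X")
    case True then show ?thesis by (intro exI[of _ "[x]"] exI[of _ w]) auto
  next
    case False
    then have "set w \<inter> X \<noteq> {}" using Cons.prems by auto
    then obtain w1 w2 where "w = w1 @ w2" "w1 \<noteq> []" "last w1 \<in> X" "set (butlast w1) \<inter> X = {}"
      using Cons.IH by blast
    then show ?thesis using False by (intro exI[of _ "x # w1"] exI[of _ w2]) auto
  qed
qed

lemma adjl_split_first:
  "adjl E w \<Longrightarrow> \<not> adjl (E - {e}) w \<Longrightarrow>
   \<exists>w1 w2. w = w1 @ w2 \<and> w1 \<noteq> [] \<and> w2 \<noteq> [] \<and> {last w1, hd w2} = e \<and> adjl (E - {e}) w1"
proof (induction E w rule: adjl.induct)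
  case (1 E x y xs)
  show ?case
  proof (cases "{x, y} = e")
    case True then show ?thesis by (intro exI[of _ "[x]"] exI[of _ "y # xs"]) auto
  next
    case False
    then have "adjl E (y # xs)" "\<not> adjl (E - {e}) (y # xs)" using 1(2,3) by auto
    then obtain w1 w2 where h: "y # xs = w1 @ w2" "w1 \<noteq> []" "w2 \<noteq> []" "{last w1, hd w2} = e" "adjl (E - {e}) w1"
      using 1(1) by blast
    have hy: "hd w1 = y" using h(1,2) by (cases w1) auto
    have "{x, y} \<in> E" using 1(2) by simp
    then have a: "adjl (E - {e}) (x # w1)" using h(2,5) hy False by (simp add: adjl_Cons)
    have b: "last (x # w1) = last w1" using h(2) by simp
    have "x # y # xs = (x # w1) @ w2" using h(1) by simp
    then show ?thesis using a b h(2-4) by (intro exI[of _ "x # w1"] exI[of _ w2]) simp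
  qed
qed auto

lemma adjl_split_last:
  assumes "adjl E w" "\<not> adjl (E - {e}) w"
  shows "\<exists>w1 w2. w = w1 @ w2 \<and> w1 \<noteq> [] \<and> w2 \<noteq> [] \<and> {last w1, hd w2} = e \<and> adjl (E - {e}) w2"
proof -
  have "adjl E (rev w)" "\<not> adjl (E - {e}) (rev w)" using assms by (auto simp: adjl_rev)
  then obtain w1 w2 where h: "rev w = w1 @ w2" "w1 \<noteq> []" "w2 \<noteq> []" "{last w1, hd w2} = e" "adjl (E - {e}) w1"
    using adjl_split_first by blast
  have 1: "w = rev w2 @ rev w1" using h(1) by (metis rev_append rev_rev_ident)
  have 2: "{last (rev w2), hd (rev w1)} = e"
    using h(2-4) by (simp add: hd_rev last_rev insert_commute)
  have 3: "adjl (E - {e}) (rev w1)" using h(5) by (simp add: adjl_rev)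
  have "w = rev w2 @ rev w1 \<and> rev w2 \<noteq> [] \<and> rev w1 \<noteq> [] \<and> {last (rev w2), hd (rev w1)} = e \<and> adjl (E - {e}) (rev w1)"
    using 1 2 3 h(2,3) by simp
  then show ?thesis by blast
qed


definition walk :: "'a set \<Rightarrow> 'a set set \<Rightarrow> 'a list \<Rightarrow> bool" where
  "walk V E w \<longleftrightarrow> w \<noteq> [] \<and> set w \<subseteq> V \<and> adjl E w"

definition sepw :: "'a set \<Rightarrow> 'a set set \<Rightarrow> 'a set \<Rightarrow> 'a set \<Rightarrow> 'a set \<Rightarrow> bool" where
  "sepw V E A B S \<longleftrightarrow> (\<forall>w. walk V E w \<longrightarrow> hd w \<in> A \<longrightarrow> last w \<in> B \<longrightarrow> set w \<inter> S \<noteq> {})"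

definition cpath :: "'a set \<Rightarrow> 'a set set \<Rightarrow> 'a set \<Rightarrow> 'a set \<Rightarrow> 'a list \<Rightarrow> bool" where
  "cpath V E A B p \<longleftrightarrow> is_path V E p \<and> hd p \<in> A \<and> last p \<in> B \<and>
     (\<forall>v\<in>set p. v \<in> A \<longrightarrow> v = hd p) \<and> (\<forall>v\<in>set p. v \<in> B \<longrightarrow> v = last p)"

definition linkage :: "'a set \<Rightarrow> 'a set set \<Rightarrow> 'a set \<Rightarrow> 'a set \<Rightarrow> nat \<Rightarrow> 'a list set \<Rightarrow> bool" where
  "linkage V E A B k P \<longleftrightarrow> finite P \<and> card P = k \<and> (\<forall>p\<in>P. cpath V E A B p) \<and>
     (\<forall>p\<in>P. \<forall>q\<in>P. p \<noteq> q \<longrightarrow> set p \<inter> set q = {})"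

lemma walk_jn:
  assumes "walk V E w1" "walk V E w2" "last w1 = hd w2"
  shows "walk V E (jn w1 w2)" "hd (jn w1 w2) = hd w1" "last (jn w1 w2) = last w2"
    "set (jn w1 w2) = set w1 \<union> set w2"
  using assms jn_adjl[of w1 w2 E] jn_set[of w1 w2] jn_hd[of w1 w2] jn_last[of w1 w2]
  unfolding walk_def by auto

lemma walk_rev: "walk V E (rev w) = walk V E w"
  unfolding walk_def by (auto simp: adjl_rev)

lemma sepw_sym: "sepw V E A B S = sepw V E B A S"
proof -
  have *: "sepw V E B A S" if "sepw V E A B S" for A B
    unfolding sepw_def
  proof (intro allI impI)
    fix w assume "walk V E w" "hd w \<in> B" "last w \<in> A"
    then have "walk V E (rev w)" "hd (rev w) \<in> A" "last (rev w) \<in> B"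
      by (auto simp: adjl_rev hd_rev last_rev walk_def)
    then show "set w \<inter> S \<noteq> {}" using that unfolding sepw_def by fastforce
  qed
  show ?thesis using *[of A B] *[of B A] by blast
qed

lemma set_butlast_last: "xs \<noteq> [] \<Longrightarrow> set xs = insert (last xs) (set (butlast xs))"
  by (induction xs) auto

lemma set_hd_tl: "xs \<noteq> [] \<Longrightarrow> set xs = insert (hd xs) (set (tl xs))"
  by (cases xs) auto

lemma adjl_prefix:
  "adjl E p \<Longrightarrow> v \<in> set (butlast p) \<Longrightarrow>
   \<exists>w. w \<noteq> [] \<and> adjl E w \<and> hd w = hd p \<and> last w = v \<and> set w \<subseteq> set (butlast p)"
proof (induction p)
  case Nil then show ?case by simp
next
  case (Cons x p)
  then have pne: "p \<noteq> []" by auto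
  show ?case
  proof (cases "v = x")
    case True then show ?thesis using pne by (intro exI[of _ "[x]"]) auto
  next
    case False
    then have "v \<in> set (butlast p)" using Cons.prems pne by auto
    moreover have "adjl E p" using Cons.prems(1) by (simp add: adjl_Cons)
    ultimately obtain w where w: "w \<noteq> []" "adjl E w" "hd w = hd p" "last w = v" "set w \<subseteq> set (butlast p)"
      using Cons.IH by blast
    have "{x, hd p} \<in> E" using Cons.prems(1) pne by (simp add: adjl_Cons)
    then have "adjl E (x # w)" using w by (simp add: adjl_Cons)
    then show ?thesis using w pne by (intro exI[of _ "x # w"]) auto
  qed
qed

lemma walk_prefix:
  assumes "walk V E p" "v \<in> set (butlast p)"
  shows "\<exists>w. walk V E w \<and> hd w = hd p \<and> last w = v \<and> set w \<subseteq> set (butlast p)"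
proof -
  have V: "set (butlast p) \<subseteq> V" using assms(1) in_set_butlastD unfolding walk_def by fast
  have "adjl E p" using assms(1) unfolding walk_def by simp
  from adjl_prefix[OF this assms(2)] obtain w where
    w: "w \<noteq> []" "adjl E w" "hd w = hd p" "last w = v" "set w \<subseteq> set (butlast p)" by (elim exE conjE)
  then have "walk V E w" using V unfolding walk_def by fast
  with w show ?thesis by (intro exI[of _ w]) simp
qed

lemma walk_suffix:
  assumes "walk V E p" "v \<in> set (tl p)"
  shows "\<exists>w. walk V E w \<and> hd w = v \<and> last w = last p \<and> set w \<subseteq> set (tl p)"
proof -
  have s: "set (butlast (rev p)) = set (tl p)" by (simp only: butlast_rev set_rev)
  have "walk V E (rev p)" using assms(1) by (simp add: walk_rev)
  moreover have "v \<in> set (butlast (rev p))" using assms(2) s by simp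
  ultimately obtain w where w: "walk V E w" "hd w = hd (rev p)" "last w = v" "set w \<subseteq> set (butlast (rev p))"
    using walk_prefix by metis
  have pne: "p \<noteq> []" using assms(1) unfolding walk_def by simp
  have wne: "w \<noteq> []" using w(1) unfolding walk_def by simp
  have "walk V E (rev w)" using w(1) by (simp add: walk_rev)
  moreover have "hd (rev w) = v" using wne w(3) by (simp add: hd_rev)
  moreover have "last (rev w) = last p" using wne pne w(2) by (simp add: last_rev hd_rev)
  moreover have "set (rev w) \<subseteq> set (tl p)" using w(4) s by simp
  ultimately show ?thesis by (intro exI[of _ "rev w"]) simp
qed

lemma graph_finite_E: "graph V E \<Longrightarrow> finite E"
proof -
  assume g: "graph V E"
  then have "E \<subseteq> Pow V" unfolding graph_def by auto
  moreover have "finite V" using g unfolding graph_def by simp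
  ultimately show ?thesis by (meson finite_Pow_iff finite_subset)
qed

lemma graph_Diff: "graph V E \<Longrightarrow> graph V (E - X)"
  unfolding graph_def by auto

lemma cpath_mono: "cpath V E' A B p \<Longrightarrow> E' \<subseteq> E \<Longrightarrow> cpath V E A B p"
  unfolding cpath_def is_path_adjl using adjl_mono by blast

lemma linkage_mono: "linkage V E' A B k P \<Longrightarrow> E' \<subseteq> E \<Longrightarrow> linkage V E A B k P"
  unfolding linkage_def using cpath_mono by blast


lemma linkage_ends:
  assumes L: "linkage V E A B k P" and fin: "finite B" and c: "card B = k"
  shows "last ` P = B"
proof -
  have sub: "last ` P \<subseteq> B" using L unfolding linkage_def cpath_def by auto
  have inj: "inj_on last P"
  proof (rule inj_onI)
    fix p q assume pq: "p \<in> P" "q \<in> P" "last p = last q"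
    show "p = q"
    proof (rule ccontr)
      assume "p \<noteq> q"
      then have "set p \<inter> set q = {}" using L pq(1,2) unfolding linkage_def by auto
      moreover have "p \<noteq> []" "q \<noteq> []" using L pq(1,2) unfolding linkage_def cpath_def is_path_def by auto
      ultimately show False using pq(3) by (metis disjoint_iff last_in_set)
    qed
  qed
  have "card (last ` P) = k" using inj L card_image unfolding linkage_def by metis
  then show ?thesis using sub fin c by (simp add: card_subset_eq)
qed

lemma linkage_starts:
  assumes L: "linkage V E A B k P" and fin: "finite A" and c: "card A = k"
  shows "hd ` P = A"
proof -
  have sub: "hd ` P \<subseteq> A" using L unfolding linkage_def cpath_def by auto
  have inj: "inj_on hd P"
  proof (rule inj_onI)
    fix p q assume pq: "p \<in> P" "q \<in> P" "hd p = hd q"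
    show "p = q"
    proof (rule ccontr)
      assume "p \<noteq> q"
      then have "set p \<inter> set q = {}" using L pq(1,2) unfolding linkage_def by auto
      moreover have "p \<noteq> []" "q \<noteq> []" using L pq(1,2) unfolding linkage_def cpath_def is_path_def by auto
      ultimately show False using pq(3) by (metis disjoint_iff hd_in_set)
    qed
  qed
  have "card (hd ` P) = k" using inj L card_image unfolding linkage_def by metis
  then show ?thesis using sub fin c by (simp add: card_subset_eq)
qed

lemma combine:
  assumes fin: "finite S" and aS: "a \<notin> S" and bS: "b \<notin> S" and ab: "a \<noteq> b" and eE: "{a,b} \<in> E"
    and LP: "linkage V E A (insert a S) k P" and LQ: "linkage V E (insert b S) B k Q"
    and kc: "card (insert a S) = k"
    and PRA: "\<forall>p\<in>P. set (butlast p) \<subseteq> RA" and QRB: "\<forall>q\<in>Q. set (tl q) \<subseteq> RB"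
    and d1: "RA \<inter> RB = {}" and d2: "S \<inter> RA = {}" and d3: "S \<inter> RB = {}"
    and aRA: "a \<in> RA" and bRB: "b \<in> RB" and d4: "A \<inter> RB = {}" and d5: "B \<inter> RA = {}"
  shows "\<exists>R. linkage V E A B k R"
proof -
  define X where "X = insert a S"
  define Y where "Y = insert b S"
  have cY: "card Y = k" using kc fin aS bS unfolding Y_def by simp
  have lastP: "last ` P = X" using linkage_ends[OF LP] fin kc unfolding X_def by simp
  have hdQ: "hd ` Q = Y" using linkage_starts[OF LQ] fin cY unfolding Y_def by simp
  define Pv where "Pv v = (SOME p. p \<in> P \<and> last p = v)" for v
  define Qv where "Qv v = (SOME q. q \<in> Q \<and> hd q = v)" for v
  have Pv: "Pv v \<in> P \<and> last (Pv v) = v" if "v \<in> X" for v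
  proof -
    have "\<exists>p. p \<in> P \<and> last p = v" using that lastP by force
    then show ?thesis unfolding Pv_def by (rule someI_ex)
  qed
  have Qv: "Qv v \<in> Q \<and> hd (Qv v) = v" if "v \<in> Y" for v
  proof -
    have "\<exists>q. q \<in> Q \<and> hd q = v" using that hdQ by force
    then show ?thesis unfolding Qv_def by (rule someI_ex)
  qed
  have cP: "cpath V E A X p" if "p \<in> P" for p using LP that unfolding linkage_def X_def by simp
  have cQ: "cpath V E Y B q" if "q \<in> Q" for q using LQ that unfolding linkage_def Y_def by simp
  have Pne: "p \<noteq> []" if "p \<in> P" for p using cP[OF that] unfolding cpath_def is_path_def by simp
  have Qne: "q \<noteq> []" if "q \<in> Q" for q using cQ[OF that] unfolding cpath_def is_path_def by simp
  have Pset: "set (Pv v) \<subseteq> insert v RA" if "v \<in> X" for v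
    using Pv[OF that] PRA set_butlast_last[OF Pne[OF conjunct1[OF Pv[OF that]]]] by auto
  have Qset: "set (Qv v) \<subseteq> insert v RB" if "v \<in> Y" for v
    using Qv[OF that] QRB set_hd_tl[OF Qne[OF conjunct1[OF Qv[OF that]]]] by auto
  define g where "g v = (if v = a then b else v)" for v
  define F where "F v = (if v = a then Pv a @ Qv b else jn (Pv v) (Qv v))" for v
  have gY: "g v \<in> Y" if "v \<in> X" for v using that unfolding g_def X_def Y_def by auto
  have Fset: "set (F v) \<subseteq> (set (Pv v) \<inter> RA) \<union> (set (Qv (g v)) \<inter> RB) \<union> ({v} \<inter> S)" if "v \<in> X" for v
  proof (cases "v = a")
    case True
    have "a \<in> X" "b \<in> Y" unfolding X_def Y_def by auto
    then have "set (Pv a) \<subseteq> RA" "set (Qv b) \<subseteq> RB" using Pset Qset aRA bRB by auto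
    then show ?thesis using True unfolding F_def g_def by auto
  next
    case False
    then have vS: "v \<in> S" using that unfolding X_def by simp
    then have vY: "v \<in> Y" unfolding Y_def by simp
    have "set (F v) = set (Pv v) \<union> set (Qv v)" unfolding F_def using False
      by (simp add: jn_set Pne Qne Pv that Qv vY)
    then show ?thesis using Pset[OF that] Qset[OF vY] False vS unfolding g_def by auto
  qed
  have Fpath: "cpath V E A B (F v)" if "v \<in> X" for v
  proof (cases "v = a")
    case True
    have aX: "a \<in> X" and bY: "b \<in> Y" unfolding X_def Y_def by auto
    define p where "p = Pv a"
    define q where "q = Qv b"
    have pP: "p \<in> P" and lp: "last p = a" using Pv[OF aX] unfolding p_def by auto
    have qQ: "q \<in> Q" and hq: "hd q = b" using Qv[OF bY] unfolding q_def by auto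
    have sp: "set p \<subseteq> RA" using Pset[OF aX] aRA unfolding p_def by auto
    have sq: "set q \<subseteq> RB" using Qset[OF bY] bRB unfolding q_def by auto
    have cp: "cpath V E A X p" using cP[OF pP] .
    have cq: "cpath V E Y B q" using cQ[OF qQ] .
    have pne: "p \<noteq> []" using Pne[OF pP] .
    have qne: "q \<noteq> []" using Qne[OF qQ] .
    have Fv: "F v = p @ q" unfolding F_def p_def q_def using True by simp
    have "distinct (p @ q)" using cp cq sp sq d1 unfolding cpath_def is_path_def by auto
    moreover have "adjl E (p @ q)" using cp cq lp hq eE pne qne unfolding cpath_def is_path_adjl
      by (simp add: adjl_append)
    moreover have "set (p @ q) \<subseteq> V" using cp cq unfolding cpath_def is_path_def by simp
    ultimately have ip: "is_path V E (p @ q)" unfolding is_path_adjl using pne by simp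
    have h: "hd (p @ q) = hd p" using pne by simp
    have l: "last (p @ q) = last q" using qne by simp
    have "hd p \<in> A" "last q \<in> B" using cp cq unfolding cpath_def by auto
    moreover have "\<forall>u\<in>set (p @ q). u \<in> A \<longrightarrow> u = hd p"
      using cp sq d4 unfolding cpath_def by auto
    moreover have "\<forall>u\<in>set (p @ q). u \<in> B \<longrightarrow> u = last q"
      using cq sp d5 unfolding cpath_def by auto
    ultimately show ?thesis using ip h l Fv unfolding cpath_def by simp
  next
    case False
    then have vS: "v \<in> S" using that unfolding X_def by simp
    then have vY: "v \<in> Y" unfolding Y_def by simp
    define p where "p = Pv v"
    define q where "q = Qv v"
    have pP: "p \<in> P" and lp: "last p = v" using Pv[OF that] unfolding p_def by auto
    have qQ: "q \<in> Q" and hq: "hd q = v" using Qv[OF vY] unfolding q_def by auto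
    have sp: "set p \<subseteq> insert v RA" using Pset[OF that] unfolding p_def by auto
    have sq: "set q \<subseteq> insert v RB" using Qset[OF vY] unfolding q_def by auto
    have cp: "cpath V E A X p" using cP[OF pP] .
    have cq: "cpath V E Y B q" using cQ[OF qQ] .
    have pne: "p \<noteq> []" using Pne[OF pP] .
    have qne: "q \<noteq> []" using Qne[OF qQ] .
    have Fv: "F v = jn p q" unfolding F_def p_def q_def using False by simp
    have lh: "last p = hd q" using lp hq by simp
    have st: "set (jn p q) = set p \<union> set q" using jn_set[OF pne qne lh] .
    have "set p \<inter> set q \<subseteq> {hd q}" using sp sq d1 hq by auto
    then have "distinct (jn p q)" using jn_distinct[OF pne qne lh] cp cq unfolding cpath_def is_path_def by simp
    moreover have "adjl E (jn p q)" using jn_adjl[OF pne lh] cp cq unfolding cpath_def is_path_adjl by simp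
    moreover have "set (jn p q) \<subseteq> V" using st cp cq unfolding cpath_def is_path_def by simp
    ultimately have ip: "is_path V E (jn p q)" unfolding is_path_adjl using pne by (simp add: jn_def)
    have h: "hd (jn p q) = hd p" using jn_hd[OF pne] .
    have l: "last (jn p q) = last q" using jn_last[OF pne qne lh] .
    have vp: "v \<in> set p" using lp pne last_in_set by metis
    have vq: "v \<in> set q" using hq qne hd_in_set by metis
    have "hd p \<in> A" "last q \<in> B" using cp cq unfolding cpath_def by auto
    moreover have "\<forall>u\<in>set (jn p q). u \<in> A \<longrightarrow> u = hd p"
    proof (intro ballI impI)
      fix u assume u: "u \<in> set (jn p q)" "u \<in> A"
      show "u = hd p"
      proof (cases "u \<in> set p")
        case True then show ?thesis using cp u(2) unfolding cpath_def by auto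
      next
        case False
        then have "u \<in> set q" using u(1) st by simp
        then have "u = v \<or> u \<in> RB" using sq by auto
        then show ?thesis using False vp d4 u(2) by auto
      qed
    qed
    moreover have "\<forall>u\<in>set (jn p q). u \<in> B \<longrightarrow> u = last q"
    proof (intro ballI impI)
      fix u assume u: "u \<in> set (jn p q)" "u \<in> B"
      show "u = last q"
      proof (cases "u \<in> set q")
        case True then show ?thesis using cq u(2) unfolding cpath_def by auto
      next
        case False
        then have "u \<in> set p" using u(1) st by simp
        then have "u = v \<or> u \<in> RA" using sp by auto
        then show ?thesis using False vq d5 u(2) by auto
      qed
    qed
    ultimately show ?thesis using ip h l Fv unfolding cpath_def by simp
  qed
  have Pdisj: "set (Pv v) \<inter> set (Pv w) = {}" if "v \<in> X" "w \<in> X" "v \<noteq> w" for v w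
  proof -
    have "Pv v \<noteq> Pv w" using Pv[OF that(1)] Pv[OF that(2)] that(3) by metis
    then show ?thesis using LP Pv[OF that(1)] Pv[OF that(2)] unfolding linkage_def by blast
  qed
  have Qdisj: "set (Qv (g v)) \<inter> set (Qv (g w)) = {}" if "v \<in> X" "w \<in> X" "v \<noteq> w" for v w
  proof -
    have "g v \<noteq> g w" using that bS ab unfolding g_def X_def by auto
    then have "Qv (g v) \<noteq> Qv (g w)" using Qv[OF gY[OF that(1)]] Qv[OF gY[OF that(2)]] by metis
    then show ?thesis using LQ Qv[OF gY[OF that(1)]] Qv[OF gY[OF that(2)]] unfolding linkage_def by blast
  qed
  have Fdisj: "set (F v) \<inter> set (F w) = {}" if "v \<in> X" "w \<in> X" "v \<noteq> w" for v w
  proof -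
    have "set (F v) \<inter> set (F w) \<subseteq>
      ((set (Pv v) \<inter> RA) \<union> (set (Qv (g v)) \<inter> RB) \<union> ({v} \<inter> S)) \<inter>
      ((set (Pv w) \<inter> RA) \<union> (set (Qv (g w)) \<inter> RB) \<union> ({w} \<inter> S))"
      using Fset[OF that(1)] Fset[OF that(2)] by blast
    also have "\<dots> = {}" using Pdisj[OF that] Qdisj[OF that] d1 d2 d3 that(3) by blast
    finally show ?thesis by blast
  qed
  have Fne: "F v \<noteq> []" if "v \<in> X" for v using Fpath[OF that] unfolding cpath_def is_path_def by simp
  have injF: "inj_on F X"
  proof (rule inj_onI)
    fix v w assume vw: "v \<in> X" "w \<in> X" "F v = F w"
    show "v = w"
    proof (rule ccontr)
      assume "v \<noteq> w"
      then have "set (F v) \<inter> set (F w) = {}" using Fdisj[OF vw(1,2)] by blast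
      then have "set (F v) = {}" using vw(3) by simp
      then show False using Fne[OF vw(1)] by simp
    qed
  qed
  have finX: "finite X" using fin unfolding X_def by simp
  have "linkage V E A B k (F ` X)"
    unfolding linkage_def
  proof (intro conjI ballI impI)
    show "finite (F ` X)" using finX by simp
    show "card (F ` X) = k" using card_image[OF injF] kc unfolding X_def by simp
    show "cpath V E A B p" if "p \<in> F ` X" for p using that Fpath by auto
    show "set p \<inter> set q = {}" if "p \<in> F ` X" "q \<in> F ` X" "p \<noteq> q" for p q
      using that Fdisj by auto
  qed
  then show ?thesis by blast
qed


lemma side:
  assumes E': "E' = E - {{a,b}}"
    and SS: "sepw V E' A B S"
    and SaE: "sepw V E A B (insert a S)"
    and wb: "walk V E' wb" "hd wb = b" "last wb \<in> B" "set wb \<inter> S = {}"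
    and Z: "sepw V E' A (insert a S) Z"
  shows "sepw V E A B Z"
  unfolding sepw_def
proof (intro allI impI)
  fix w assume w: "walk V E w" "hd w \<in> A" "last w \<in> B"
  show "set w \<inter> Z \<noteq> {}"
  proof
    assume wZ: "set w \<inter> Z = {}"
    have "set w \<inter> insert a S \<noteq> {}" using SaE w unfolding sepw_def by blast
    from first_hit[OF this] obtain w1 w2 where h: "w = w1 @ w2" "w1 \<noteq> []" "last w1 \<in> insert a S"
      "set (butlast w1) \<inter> insert a S = {}" by blast
    have adjw1: "adjl E w1" using w(1) h(1) unfolding walk_def by (simp add: adjl_append)
    have sw1: "set w1 \<subseteq> set w" using h(1) by simp
    have hw1: "hd w1 = hd w" using h(1,2) by simp
    show False
    proof (cases "adjl E' w1")
      case True
      then have "walk V E' w1" using h(2) sw1 w(1) unfolding walk_def by auto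
      then have "set w1 \<inter> Z \<noteq> {}" using Z hw1 w(2) h(3) unfolding sepw_def by auto
      then show False using wZ sw1 by auto
    next
      case False
      then have "\<not> adjl (E - {{a,b}}) w1" using E' by simp
      from adjl_split_first[OF adjw1 this] obtain u1 u2 where
        u: "w1 = u1 @ u2" "u1 \<noteq> []" "u2 \<noteq> []" "{last u1, hd u2} = {a,b}" "adjl (E - {{a,b}}) u1"
        by blast
      have "butlast w1 = u1 @ butlast u2" using u(1,3) by (simp add: butlast_append)
      then have su1: "set u1 \<subseteq> set (butlast w1)" by simp
      have "last u1 \<in> set u1" using u(2) by simp
      then have lu1: "last u1 \<notin> insert a S" using su1 h(4) by blast
      have "last u1 \<in> {a,b}" using u(4) by blast
      then have lb: "last u1 = b" using lu1 by blast
      have u1S: "set u1 \<inter> S = {}" using su1 h(4) by blast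
      have wu1: "walk V E' u1" using u(2,5) sw1 w(1) u(1) E' unfolding walk_def by auto
      have lh: "last u1 = hd wb" using lb wb(2) by simp
      have "walk V E' (jn u1 wb)" using walk_jn[OF wu1 wb(1) lh] by simp
      moreover have "hd (jn u1 wb) \<in> A" using walk_jn[OF wu1 wb(1) lh] hw1 u(1,2) w(2) by simp
      moreover have "last (jn u1 wb) \<in> B" using walk_jn[OF wu1 wb(1) lh] wb(3) by simp
      moreover have "set (jn u1 wb) \<inter> S = {}" using walk_jn[OF wu1 wb(1) lh] wb(4) u1S by auto
      ultimately show False using SS unfolding sepw_def by blast
    qed
  qed
qed

lemma adjl_empty: "adjl {} w \<Longrightarrow> w \<noteq> [] \<Longrightarrow> w = [hd w]"
  by (cases w; cases "tl w") auto

lemma menger_aux: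
  "finite E \<Longrightarrow> graph V E \<Longrightarrow> (\<forall>S\<subseteq>V. sepw V E A B S \<longrightarrow> k \<le> card S) \<Longrightarrow> \<exists>P. linkage V E A B k P"
proof (induction E arbitrary: A B k rule: finite_psubset_induct)
  case (psubset E)
  have finV: "finite V" using psubset.prems(1) unfolding graph_def by simp
  show ?case
  proof (cases "E = {}")
    case True
    let ?T = "A \<inter> B \<inter> V"
    have "sepw V E A B ?T"
      unfolding sepw_def
    proof (intro allI impI)
      fix w assume w: "walk V E w" "hd w \<in> A" "last w \<in> B"
      then have "w = [hd w]" using adjl_empty True unfolding walk_def by auto
      then have "hd w \<in> ?T" using w unfolding walk_def by (metis IntI last.simps list.set_intros(1) subsetD)
      then show "set w \<inter> ?T \<noteq> {}" using w(1) unfolding walk_def by (metis disjoint_iff hd_in_set)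
    qed
    then have "k \<le> card ?T" using psubset.prems(2) by blast
    then obtain T where T: "T \<subseteq> ?T" "card T = k" by (meson obtain_subset_with_card_n)
    have finT: "finite T" using finV T(1) finite_subset by blast
    have inj: "inj_on (\<lambda>v. [v]) T" by (simp add: inj_on_def)
    have "linkage V E A B k ((\<lambda>v. [v]) ` T)"
      unfolding linkage_def
    proof (intro conjI ballI impI)
      show "finite ((\<lambda>v. [v]) ` T)" using finT by simp
      show "card ((\<lambda>v. [v]) ` T) = k" using card_image[OF inj] T(2) by simp
      show "cpath V E A B p" if "p \<in> (\<lambda>v. [v]) ` T" for p
        using that T(1) unfolding cpath_def is_path_adjl by auto
      show "set p \<inter> set q = {}" if "p \<in> (\<lambda>v. [v]) ` T" "q \<in> (\<lambda>v. [v]) ` T" "p \<noteq> q" for p q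
        using that by auto
    qed
    then show ?thesis by blast
  next
    case False
    then obtain e where eE: "e \<in> E" by blast
    then obtain x y where e: "e = {x,y}" "x \<noteq> y" "x \<in> V" "y \<in> V"
      using psubset.prems(1) unfolding graph_def by blast
    define E' where "E' = E - {e}"
    have psub: "E' \<subset> E" using eE unfolding E'_def by blast
    have gE': "graph V E'" using graph_Diff psubset.prems(1) unfolding E'_def by blast
    show ?thesis
    proof (cases "\<forall>S\<subseteq>V. sepw V E' A B S \<longrightarrow> k \<le> card S")
      case True
      then obtain P where "linkage V E' A B k P" using psubset.IH[OF psub gE'] by blast
      then show ?thesis using linkage_mono psub by blast
    next
      case False
      then obtain S where S: "S \<subseteq> V" "sepw V E' A B S" "card S < k" by force
      have finS: "finite S" by (rule finite_subset[OF S(1) finV])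
      have "\<not> sepw V E A B S"
      proof
        assume "sepw V E A B S"
        then have "k \<le> card S" using psubset.prems(2) S(1) by simp
        then show False using S(3) by simp
      qed
      then obtain w where w: "walk V E w" "hd w \<in> A" "last w \<in> B" "set w \<inter> S = {}"
        unfolding sepw_def by blast
      have nE': "\<not> adjl E' w"
      proof
        assume "adjl E' w"
        then have "walk V E' w" using w(1) unfolding walk_def by simp
        then show False using S(2) w unfolding sepw_def by blast
      qed
      define RA where "RA = {v. \<exists>w. walk V E' w \<and> hd w \<in> A \<and> last w = v \<and> set w \<inter> S = {}}"
      define RB where "RB = {v. \<exists>w. walk V E' w \<and> hd w = v \<and> last w \<in> B \<and> set w \<inter> S = {}}"
      have RAB: "RA \<inter> RB = {}"
      proof (rule ccontr)
        assume "RA \<inter> RB \<noteq> {}"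
        then obtain v w1 w2 where h: "walk V E' w1" "hd w1 \<in> A" "last w1 = v" "set w1 \<inter> S = {}"
          "walk V E' w2" "hd w2 = v" "last w2 \<in> B" "set w2 \<inter> S = {}"
          unfolding RA_def RB_def by blast
        have lh: "last w1 = hd w2" using h by simp
        note J = walk_jn[OF h(1) h(5) lh]
        have "set (jn w1 w2) \<inter> S = {}" using J(4) h(4,8) by auto
        then show False using S(2) J h(2,7) unfolding sepw_def by metis
      qed
      have SRA: "S \<inter> RA = {}" unfolding RA_def walk_def by (auto dest: last_in_set)
      have SRB: "S \<inter> RB = {}" unfolding RB_def walk_def by (auto dest: hd_in_set)
      have ARB: "A \<inter> RB = {}"
      proof (rule ccontr)
        assume "A \<inter> RB \<noteq> {}"
        then obtain w2 where "walk V E' w2" "hd w2 \<in> A" "last w2 \<in> B" "set w2 \<inter> S = {}"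
          unfolding RB_def by blast
        then show False using S(2) unfolding sepw_def by blast
      qed
      have BRA: "B \<inter> RA = {}"
      proof (rule ccontr)
        assume "B \<inter> RA \<noteq> {}"
        then obtain w2 where "walk V E' w2" "hd w2 \<in> A" "last w2 \<in> B" "set w2 \<inter> S = {}"
          unfolding RA_def by blast
        then show False using S(2) unfolding sepw_def by blast
      qed
      have adjw: "adjl E w" using w(1) unfolding walk_def by simp
      from adjl_split_first[OF adjw nE'[unfolded E'_def]] obtain w1 w2 where
        f: "w = w1 @ w2" "w1 \<noteq> []" "w2 \<noteq> []" "{last w1, hd w2} = e" "adjl E' w1"
        unfolding E'_def by blast
      from adjl_split_last[OF adjw nE'[unfolded E'_def]] obtain u1 u2 where
        l: "w = u1 @ u2" "u1 \<noteq> []" "u2 \<noteq> []" "{last u1, hd u2} = e" "adjl E' u2"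
        unfolding E'_def by blast
      define a where "a = last w1"
      define b where "b = hd u2"
      have wa: "walk V E' w1" "hd w1 \<in> A" "last w1 = a" "set w1 \<inter> S = {}"
        using f w unfolding walk_def a_def by auto
      then have aRA: "a \<in> RA" unfolding RA_def by blast
      have wb: "walk V E' u2" "hd u2 = b" "last u2 \<in> B" "set u2 \<inter> S = {}"
        using l w unfolding walk_def b_def by auto
      then have bRB: "b \<in> RB" unfolding RB_def by blast
      have ab: "a \<noteq> b" using aRA bRB RAB by blast
      have "a \<in> e" "b \<in> e" using f(4) l(4) unfolding a_def b_def by blast+
      then have eab: "e = {a,b}" using ab e(1) by blast
      have E'ab: "E' = E - {{a,b}}" using eab unfolding E'_def by simp
      have abV: "a \<in> V" "b \<in> V" using \<open>a \<in> e\<close> \<open>b \<in> e\<close> e by auto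
      have sepc: "sepw V E A B (insert c S)" if "c \<in> e" for c
        unfolding sepw_def
      proof (intro allI impI)
        fix w' assume w': "walk V E w'" "hd w' \<in> A" "last w' \<in> B"
        show "set w' \<inter> insert c S \<noteq> {}"
        proof (cases "adjl E' w'")
          case True
          then have "walk V E' w'" using w'(1) unfolding walk_def by simp
          then show ?thesis using S(2) w' unfolding sepw_def by blast
        next
          case False
          have adjw': "adjl E w'" using w'(1) unfolding walk_def by simp
          from adjl_split_first[OF adjw' False[unfolded E'_def]] obtain v1 v2 where
            "w' = v1 @ v2" "v1 \<noteq> []" "v2 \<noteq> []" "{last v1, hd v2} = e"
            by blast
          then have "e \<subseteq> set w'" by auto
          then show ?thesis using that by blast
        qed
      qed
      have aS: "a \<notin> S" using aRA SRA by blast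
      have bS: "b \<notin> S" using bRB SRB by blast
      have "k \<le> card (insert a S)" using psubset.prems(2) sepc[OF \<open>a \<in> e\<close>] S(1) abV by simp
      then have kc: "card (insert a S) = k" using finS aS S(3) by simp
      have "k \<le> card (insert b S)" using psubset.prems(2) sepc[OF \<open>b \<in> e\<close>] S(1) abV by simp
      then have kcb: "card (insert b S) = k" using finS bS S(3) by simp
      have sideA: "\<forall>Z\<subseteq>V. sepw V E' A (insert a S) Z \<longrightarrow> k \<le> card Z"
      proof (intro allI impI)
        fix Z assume Z: "Z \<subseteq> V" "sepw V E' A (insert a S) Z"
        have "sepw V E A B Z" using side[OF E'ab S(2) sepc[OF \<open>a \<in> e\<close>] wb Z(2)] .
        then show "k \<le> card Z" using psubset.prems(2) Z(1) by blast
      qed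
      have sideB: "\<forall>Z\<subseteq>V. sepw V E' (insert b S) B Z \<longrightarrow> k \<le> card Z"
      proof (intro allI impI)
        fix Z assume Z: "Z \<subseteq> V" "sepw V E' (insert b S) B Z"
        have E'ba: "E' = E - {{b,a}}" using E'ab by (simp add: insert_commute)
        have SS': "sepw V E' B A S" using S(2) sepw_sym by metis
        have SbE: "sepw V E B A (insert b S)" using sepc[OF \<open>b \<in> e\<close>] sepw_sym by metis
        have Z': "sepw V E' B (insert b S) Z" using Z(2) sepw_sym by metis
        have wne: "w1 \<noteq> []" using f(2) .
        have rw: "walk V E' (rev w1)" "hd (rev w1) = a" "last (rev w1) \<in> A" "set (rev w1) \<inter> S = {}"
          using wa wne by (auto simp: walk_rev hd_rev last_rev)
        have "sepw V E B A Z" using side[OF E'ba SS' SbE rw Z'] .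
        then have "sepw V E A B Z" using sepw_sym by metis
        then show "k \<le> card Z" using psubset.prems(2) Z(1) by blast
      qed
      obtain P where LP: "linkage V E' A (insert a S) k P" using psubset.IH[OF psub gE' sideA] by blast
      obtain Q where LQ: "linkage V E' (insert b S) B k Q" using psubset.IH[OF psub gE' sideB] by blast
      have PRA: "\<forall>p\<in>P. set (butlast p) \<subseteq> RA"
      proof (intro ballI subsetI)
        fix p v assume p: "p \<in> P" and v: "v \<in> set (butlast p)"
        have cp: "cpath V E' A (insert a S) p" using LP p unfolding linkage_def by blast
        then have wp: "walk V E' p" unfolding cpath_def is_path_adjl walk_def by blast
        have dp: "distinct p" "p \<noteq> []" using cp unfolding cpath_def is_path_def by auto
        have bS': "set (butlast p) \<inter> S = {}"
        proof (rule ccontr)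
          assume "set (butlast p) \<inter> S \<noteq> {}"
          then obtain u where u: "u \<in> set (butlast p)" "u \<in> S" by blast
          then have "u \<in> set p" by (meson in_set_butlastD)
          then have "u = last p" using cp u(2) unfolding cpath_def by blast
          then show False using distinct_last_butlast[OF dp] u(1) by simp
        qed
        obtain wv where wv: "walk V E' wv" "hd wv = hd p" "last wv = v" "set wv \<subseteq> set (butlast p)"
          using walk_prefix[OF wp v] by blast
        have "hd p \<in> A" using cp unfolding cpath_def by blast
        moreover have "set wv \<inter> S = {}" using wv(4) bS' by blast
        ultimately show "v \<in> RA" using wv unfolding RA_def by auto
      qed
      have QRB: "\<forall>q\<in>Q. set (tl q) \<subseteq> RB"
      proof (intro ballI subsetI)
        fix p v assume p: "p \<in> Q" and v: "v \<in> set (tl p)"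
        have cp: "cpath V E' (insert b S) B p" using LQ p unfolding linkage_def by blast
        then have wp: "walk V E' p" unfolding cpath_def is_path_adjl walk_def by blast
        have dp: "distinct p" using cp unfolding cpath_def is_path_def by auto
        have bS': "set (tl p) \<inter> S = {}"
        proof (rule ccontr)
          assume "set (tl p) \<inter> S \<noteq> {}"
          then obtain u where u: "u \<in> set (tl p)" "u \<in> S" by blast
          then have "u \<in> set p" by (cases p) auto
          then have "u = hd p" using cp u(2) unfolding cpath_def by blast
          then show False using distinct_hd_tl[OF dp] u(1) by simp
        qed
        obtain wv where wv: "walk V E' wv" "hd wv = v" "last wv = last p" "set wv \<subseteq> set (tl p)"
          using walk_suffix[OF wp v] by blast
        have "last p \<in> B" using cp unfolding cpath_def by blast
        moreover have "set wv \<inter> S = {}" using wv(4) bS' by blast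
        ultimately show "v \<in> RB" using wv unfolding RB_def by auto
      qed
      have EE: "E' \<subseteq> E" using psub by blast
      have eE': "{a,b} \<in> E" using eE eab by simp
      show ?thesis
        using combine[OF finS aS bS ab eE' linkage_mono[OF LP EE] linkage_mono[OF LQ EE] kc PRA QRB
            RAB SRA SRB aRA bRB ARB BRA] .
    qed
  qed
qed

theorem menger:
  "graph V E \<Longrightarrow> (\<forall>S\<subseteq>V. sepw V E A B S \<longrightarrow> k \<le> card S) \<Longrightarrow> \<exists>P. linkage V E A B k P"
  by (rule menger_aux[OF graph_finite_E])


lemma arm:
  assumes P: "is_path V E r" and h: "hd r = u" and l: "last r = w" and uw: "u \<noteq> w" and o: "odd (length r)"
  shows "r ! 1 \<in> set r" "r ! 1 \<noteq> u" "r ! 1 \<noteq> w"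
   "is_path V E (take 2 r)" "hd (take 2 r) = u" "last (take 2 r) = r ! 1" "path_len (take 2 r) = 1"
   "internal (take 2 r) = {}"
   "is_path V E (drop 1 r)" "hd (drop 1 r) = r ! 1" "last (drop 1 r) = w" "odd (path_len (drop 1 r))"
   "internal (drop 1 r) \<subseteq> set r - {u, w, r ! 1}"
proof -
  have rne: "r \<noteq> []" using P unfolding is_path_def by simp
  have d: "distinct r" using P unfolding is_path_def by simp
  have adj: "adjl E r" "set r \<subseteq> V" using P unfolding is_path_adjl by auto
  obtain a r1 where r1: "r = a # r1" using rne by (cases r) auto
  have "r1 \<noteq> []" using r1 h l uw by auto
  then obtain b rest where r2: "r1 = b # rest" by (cases r1) auto
  have "rest \<noteq> []"
  proof
    assume "rest = []"
    then have "length r = 2" using r1 r2 by simp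
    then show False using o by simp
  qed
  note rr = r1 r2
  have a: "a = u" using h rr by simp
  have lw: "last rest = w" using l rr \<open>rest \<noteq> []\<close> by simp
  have wr: "w \<in> set rest" using lw \<open>rest \<noteq> []\<close> by auto
  have dd: "a \<noteq> b" "a \<notin> set rest" "b \<notin> set rest" "distinct rest" using d rr by auto
  show "r ! 1 \<in> set r" "r ! 1 \<noteq> u" "r ! 1 \<noteq> w" using rr a dd wr by auto
  show "is_path V E (take 2 r)" using P adjl_take[of E r 2] unfolding is_path_adjl
    by (auto simp: rr dest: in_set_takeD)
  show "hd (take 2 r) = u" "last (take 2 r) = r ! 1" "path_len (take 2 r) = 1" "internal (take 2 r) = {}"
    using rr a by (auto simp: path_len_def internal_def)
  show "is_path V E (drop 1 r)" using P adjl_drop[of E r 1] unfolding is_path_adjl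
    by (auto simp: rr)
  show "hd (drop 1 r) = r ! 1" "last (drop 1 r) = w" using rr lw \<open>rest \<noteq> []\<close> by auto
  show "odd (path_len (drop 1 r))" using o rr by (simp add: path_len_def)
  have "internal (drop 1 r) = set (butlast rest)" using rr by (simp add: internal_def)
  moreover have "w \<notin> set (butlast rest)" using distinct_last_butlast[OF dd(4) \<open>rest \<noteq> []\<close>] lw by simp
  moreover have "set (butlast rest) \<subseteq> set rest" by (meson in_set_butlastD subsetI)
  ultimately show "internal (drop 1 r) \<subseteq> set r - {u, w, r ! 1}" using rr a dd by auto
qed

lemma arm':
  assumes uw: "u \<noteq> w" and a: "is_path V E r \<and> hd r = u \<and> last r = w \<and> odd (length r)"
  shows "r ! 1 \<in> set r" "r ! 1 \<noteq> u" "r ! 1 \<noteq> w"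
   "is_path V E (take 2 r)" "hd (take 2 r) = u" "last (take 2 r) = r ! 1" "path_len (take 2 r) = 1"
   "internal (take 2 r) = {}"
   "is_path V E (drop 1 r)" "hd (drop 1 r) = r ! 1" "last (drop 1 r) = w" "odd (path_len (drop 1 r))"
   "internal (drop 1 r) \<subseteq> set r - {u, w, r ! 1}"
proof -
  have a1: "is_path V E r" "hd r = u" "last r = w" "odd (length r)" using a by auto
  note B = arm[OF a1(1) a1(2) a1(3) uw a1(4)]
  show "r ! 1 \<in> set r" "r ! 1 \<noteq> u" "r ! 1 \<noteq> w" by (fact B(1), fact B(2), fact B(3))
  show "is_path V E (take 2 r)" "hd (take 2 r) = u" "last (take 2 r) = r ! 1" "path_len (take 2 r) = 1"
   "internal (take 2 r) = {}" by (fact B(4), fact B(5), fact B(6), fact B(7), fact B(8))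
  show "is_path V E (drop 1 r)" "hd (drop 1 r) = r ! 1" "last (drop 1 r) = w" "odd (path_len (drop 1 r))"
   "internal (drop 1 r) \<subseteq> set r - {u, w, r ! 1}" by (fact B(9), fact B(10), fact B(11), fact B(12), fact B(13))
qed

lemma K23_E_cases: "e \<in> K23_E \<Longrightarrow> \<exists>i j. e = {i, j} \<and> i \<in> {0,1} \<and> j \<in> {2,3,4}"
  unfolding K23_E_def by blast

lemma theta_K23:
  fixes R :: "nat \<Rightarrow> 'a list"
  assumes uw: "u \<noteq> w"
    and RP: "\<And>j. j \<in> {2,3,4} \<Longrightarrow> is_path V E (R j) \<and> hd (R j) = u \<and> last (R j) = w \<and> odd (length (R j))"
    and RD: "\<And>i j. i \<in> {2,3,4} \<Longrightarrow> j \<in> {2,3,4} \<Longrightarrow> i \<noteq> j \<Longrightarrow>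
        (set (R i) - {u, w}) \<inter> (set (R j) - {u, w}) = {}"
  shows "K23_based V E"
proof -
  define f where "f n = (if n = 0 then u else if n = (1::nat) then w else R n ! 1)" for n
  define P where "P e = (if (0::nat) \<in> e then take 2 (R (Max e)) else drop 1 (R (Max e)))" for e
  note A = arm'[OF uw RP]
  have uV: "u \<in> V" and wV: "w \<in> V"
  proof -
    have p2: "is_path V E (R 2)" "hd (R 2) = u" "last (R 2) = w" using RP[of 2] by auto
    then have "R 2 \<noteq> []" "set (R 2) \<subseteq> V" unfolding is_path_def by auto
    then show "u \<in> V" "w \<in> V" using p2 by (metis hd_in_set subsetD, metis last_in_set subsetD)
  qed
  have fj: "f j \<in> set (R j) - {u, w}" if "j \<in> {2,3,4}" for j
    using A(1-3)[OF that] that unfolding f_def by auto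
  have fV: "f ` K23_V \<subseteq> V"
  proof
    fix x assume "x \<in> f ` K23_V"
    then obtain n where n: "n \<in> {0,1,2,3,4}" "x = f n" unfolding K23_V_def by blast
    show "x \<in> V"
    proof (cases "n \<in> {2,3,4}")
      case True
      then have "x \<in> set (R n)" using fj n(2) by blast
      moreover have "set (R n) \<subseteq> V" using RP[OF True] unfolding is_path_def by blast
      ultimately show ?thesis by blast
    next
      case False
      then have "n = 0 \<or> n = 1" using n(1) by auto
      then show ?thesis using n(2) uV wV unfolding f_def by auto
    qed
  qed
  have inj: "inj_on f K23_V"
  proof (rule inj_onI)
    fix m n assume mn: "m \<in> K23_V" "n \<in> K23_V" "f m = f n"
    have sp: "x \<in> {2,3,4} \<or> x \<in> {0,1}" if "x \<in> K23_V" for x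
      using that unfolding K23_V_def by (simp; blast)
    have f01: "f x = u \<or> f x = w" if "x \<in> {0,1}" for x using that unfolding f_def by auto
    show "m = n"
    proof (rule ccontr)
      assume ne: "m \<noteq> n"
      from sp[OF mn(1)] show False
      proof
        assume m: "m \<in> {2,3,4}"
        from sp[OF mn(2)] show False
        proof
          assume n: "n \<in> {2,3,4}"
          have "f m \<in> (set (R m) - {u,w}) \<inter> (set (R n) - {u,w})" using fj[OF m] fj[OF n] mn(3) by simp
          then show False using RD[OF m n ne] by simp
        next
          assume n: "n \<in> {0,1}"
          show False using fj[OF m] mn(3) f01[OF n] by auto
        qed
      next
        assume m: "m \<in> {0,1}"
        from sp[OF mn(2)] show False
        proof
          assume n: "n \<in> {2,3,4}"
          show False using fj[OF n] mn(3) f01[OF m] by auto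
        next
          assume n: "n \<in> {0,1}"
          have "f 0 = u" "f 1 = w" unfolding f_def by auto
          then show False using m n ne mn(3) uw by auto
        qed
      qed
    qed
  qed
  have fimg: "f ` K23_V = {u, w, f 2, f 3, f 4}" unfolding K23_V_def f_def by auto
  have int1: "internal (P {1, j}) \<subseteq> set (R j) - {u, w, f j}" and P1: "P {1, j} = drop 1 (R j)"
    if "j \<in> {2,3,4}" for j
  proof -
    have "Max {1::nat, j} = j" using that by auto
    then show "P {1, j} = drop 1 (R j)" unfolding P_def using that by auto
    then show "internal (P {1, j}) \<subseteq> set (R j) - {u, w, f j}" using A(13)[OF that] that unfolding f_def by auto
  qed
  have P0: "P {0, j} = take 2 (R j)" if "j \<in> {2,3,4}" for j
  proof -
    have "Max {0::nat, j} = j" using that by auto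
    then show "P {0, j} = take 2 (R j)" unfolding P_def using that by auto
  qed
  have int0: "internal (P {0, j}) = {}" if "j \<in> {2,3,4}" for j using P0[OF that] A(8)[OF that] by simp
  have intd: "internal (P e) \<inter> f ` K23_V = {}" if eK: "e \<in> K23_E" for e
  proof -
    obtain i j where ij: "e = {i, j}" "i \<in> {0,1}" "j \<in> {2,3,4}" using K23_E_cases[OF eK] by blast
    show ?thesis
    proof (cases "i = 0")
      case True then show ?thesis using int0[OF ij(3)] ij(1) by simp
    next
      case False
      then have i1: "i = 1" using ij(2) by simp
      have "internal (P e) \<subseteq> set (R j) - {u, w, f j}" using int1[OF ij(3)] ij(1) i1 by simp
      moreover have fk: "f k \<notin> set (R j) - {u, w, f j}" if "k \<in> {2,3,4}" for k
      proof (cases "k = j")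
        case True then show ?thesis by simp
      next
        case False
        then show ?thesis using fj[OF that] RD[OF that ij(3) False] by blast
      qed
      ultimately show ?thesis unfolding fimg using fk[of 2] fk[of 3] fk[of 4] by auto
    qed
  qed
  have edges: "is_path V E (P e) \<and> {hd (P e), last (P e)} = f ` e \<and> odd (path_len (P e))" if eK: "e \<in> K23_E" for e
  proof -
    obtain i j where ij: "e = {i, j}" "i \<in> {0,1}" "j \<in> {2,3,4}" using K23_E_cases[OF eK] by blast
    have f0: "f 0 = u" and f1: "f 1 = w" unfolding f_def by auto
    have fjj: "f j = R j ! 1" using ij(3) unfolding f_def by auto
    show ?thesis
    proof (cases "i = 0")
      case True then show ?thesis using P0[OF ij(3)] A(4-7)[OF ij(3)] ij(1) f0 fjj by auto
    next
      case False
      then have i1: "i = 1" using ij(2) by simp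
      then show ?thesis using P1[OF ij(3)] A(9-12)[OF ij(3)] ij(1) f1 fjj by auto
    qed
  qed
  have disj: "internal (P e) \<inter> internal (P e') = {}" if eK: "e \<in> K23_E" and eK': "e' \<in> K23_E" and ne: "e \<noteq> e'" for e e'
  proof -
    obtain i j where ij: "e = {i, j}" "i \<in> {0,1}" "j \<in> {2,3,4}" using K23_E_cases[OF eK] by blast
    obtain i' j' where ij': "e' = {i', j'}" "i' \<in> {0,1}" "j' \<in> {2,3,4}" using K23_E_cases[OF eK'] by blast
    show ?thesis
    proof (cases "i = 0 \<or> i' = 0")
      case True then show ?thesis using int0[OF ij(3)] int0[OF ij'(3)] ij(1) ij'(1) by auto
    next
      case False
      then have "i = 1" "i' = 1" using ij(2) ij'(2) by auto
      then have "j \<noteq> j'" using ne ij(1) ij'(1) by auto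
      then have "(set (R j) - {u, w}) \<inter> (set (R j') - {u, w}) = {}" using RD ij(3) ij'(3) by blast
      then show ?thesis using int1[OF ij(3)] int1[OF ij'(3)] ij(1) ij'(1) \<open>i = 1\<close> \<open>i' = 1\<close> by blast
    qed
  qed
  have C1: "\<forall>e\<in>K23_E. is_path V E (P e) \<and> {hd (P e), last (P e)} = f ` e \<and> odd (path_len (P e))
                 \<and> internal (P e) \<inter> f ` K23_V = {}"
  proof
    fix e assume eK: "e \<in> K23_E"
    show "is_path V E (P e) \<and> {hd (P e), last (P e)} = f ` e \<and> odd (path_len (P e))
                 \<and> internal (P e) \<inter> f ` K23_V = {}" using edges[OF eK] intd[OF eK] by simp
  qed
  have C2: "\<forall>e\<in>K23_E. \<forall>e'\<in>K23_E. e \<noteq> e' \<longrightarrow> internal (P e) \<inter> internal (P e') = {}"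
    using disj by simp
  show ?thesis unfolding K23_based_def contains_bisubdivision_def
    using inj fV C1 C2 by (intro exI[of _ f] exI[of _ P] conjI)
qed


lemma is_cycle_adjl: "is_cycle V E c \<longleftrightarrow> length c \<ge> 3 \<and> distinct c \<and> set c \<subseteq> V \<and> adjl E c \<and> {last c, hd c} \<in> E"
  unfolding is_cycle_def is_path_adjl by auto

lemma cycle_rotate1:
  assumes "is_cycle V E c" shows "is_cycle V E (rotate1 c)"
proof -
  have c: "length c \<ge> 3" "distinct c" "set c \<subseteq> V" "adjl E c" "{last c, hd c} \<in> E"
    using assms unfolding is_cycle_adjl by auto
  obtain x xs where cx: "c = x # xs" using c(1) by (cases c) auto
  have xs: "xs \<noteq> []" using c(1) cx by auto
  have r: "rotate1 c = xs @ [x]" using cx by simp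
  have a1: "adjl E xs" "{x, hd xs} \<in> E" using c(4) cx xs by (auto simp: adjl_Cons)
  have "{last xs, x} \<in> E" using c(5) cx xs by simp
  then have "adjl E (xs @ [x])" using a1 xs by (simp add: adjl_append)
  moreover have "{last (xs @ [x]), hd (xs @ [x])} \<in> E" using a1 xs by simp
  moreover have "length (xs @ [x]) \<ge> 3" "distinct (xs @ [x])" "set (xs @ [x]) \<subseteq> V" using c cx by auto
  ultimately show ?thesis unfolding is_cycle_adjl r by simp
qed

lemma cycle_rotate: "is_cycle V E c \<Longrightarrow> is_cycle V E (rotate n c)"
  by (induction n) (simp_all add: cycle_rotate1)

lemma cycle_arcs:
  assumes C: "is_cycle V E c" and d0: "0 < d" and dn: "d < length c"
  shows "is_path V E (take (Suc d) c)" "hd (take (Suc d) c) = c ! 0" "last (take (Suc d) c) = c ! d"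
    "length (take (Suc d) c) = Suc d"
    "is_path V E (c ! 0 # rev (drop d c))" "hd (c ! 0 # rev (drop d c)) = c ! 0"
    "last (c ! 0 # rev (drop d c)) = c ! d" "length (c ! 0 # rev (drop d c)) = Suc (length c - d)"
    "set (take (Suc d) c) \<subseteq> set c" "set (c ! 0 # rev (drop d c)) \<subseteq> set c"
    "(set (take (Suc d) c) - {c ! 0, c ! d}) \<inter> (set (c ! 0 # rev (drop d c)) - {c ! 0, c ! d}) = {}"
proof -
  have c: "length c \<ge> 3" "distinct c" "set c \<subseteq> V" "adjl E c" "{last c, hd c} \<in> E"
    using C unfolding is_cycle_adjl by auto
  have cne: "c \<noteq> []" using c(1) by auto
  have tk: "take (Suc d) c = take d c @ [c ! d]" using dn by (simp add: take_Suc_conv_app_nth)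
  have dr: "drop d c = c ! d # drop (Suc d) c" using dn by (simp add: Cons_nth_drop_Suc)
  have h0: "hd c = c ! 0" using cne by (simp add: hd_conv_nth)
  have c0t: "c ! 0 \<in> set (take d c)" using d0 dn by (simp add: in_set_conv_nth) (metis d0 nth_take)
  have disj: "set (take d c) \<inter> set (drop d c) = {}" using c(2) by (simp add: set_take_disj_set_drop_if_distinct)
  show "is_path V E (take (Suc d) c)" unfolding is_path_adjl
    using c adjl_take[of E c "Suc d"] set_take_subset[of "Suc d" c] cne by auto
  show "hd (take (Suc d) c) = c ! 0" using h0 by simp
  show "last (take (Suc d) c) = c ! d" using tk by simp
  show "length (take (Suc d) c) = Suc d" using dn by simp
  have ld: "last (drop d c) = last c" using dn by simp
  have "adjl E (rev (drop d c))" using adjl_drop[OF c(4)] by (simp add: adjl_rev)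
  moreover have "{c ! 0, hd (rev (drop d c))} \<in> E"
  proof -
    have "hd (rev (drop d c)) = last (drop d c)" by (simp only: hd_rev)
    then have "hd (rev (drop d c)) = last c" using ld by simp
    moreover have "{c ! 0, last c} \<in> E" using c(5) h0 by (simp add: insert_commute)
    ultimately show ?thesis by simp
  qed
  ultimately have "adjl E (c ! 0 # rev (drop d c))" by (simp add: adjl_Cons)
  moreover have "c ! 0 \<notin> set (drop d c)" using c0t disj by blast
  moreover have "set (drop d c) \<subseteq> V" using c(3) set_drop_subset[of d c] by blast
  moreover have "c ! 0 \<in> V" using c(3) cne h0 by (metis hd_in_set subsetD)
  ultimately show "is_path V E (c ! 0 # rev (drop d c))" unfolding is_path_adjl
    using c(2) by (simp add: distinct_drop)
  show "hd (c ! 0 # rev (drop d c)) = c ! 0" by simp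
  show "last (c ! 0 # rev (drop d c)) = c ! d" using dr by simp
  show "length (c ! 0 # rev (drop d c)) = Suc (length c - d)" by simp
  show "set (take (Suc d) c) \<subseteq> set c" by (rule set_take_subset)
  show "set (c ! 0 # rev (drop d c)) \<subseteq> set c" using set_drop_subset[of d c] cne h0
    by (simp add: hd_in_set)
  have "set (take (Suc d) c) - {c ! 0, c ! d} \<subseteq> set (take d c)" using tk by auto
  moreover have "set (c ! 0 # rev (drop d c)) - {c ! 0, c ! d} \<subseteq> set (drop d c)" by auto
  ultimately show "(set (take (Suc d) c) - {c ! 0, c ! d}) \<inter> (set (c ! 0 # rev (drop d c)) - {c ! 0, c ! d}) = {}"
    using disj by blast
qed

lemma mod_back: "i < n \<Longrightarrow> j < n \<Longrightarrow> (i + (j + n - i) mod n) mod n = (j::nat)"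
proof -
  assume a: "i < n" "j < n"
  have "(i + (j + n - i) mod n) mod n = (i + (j + n - i)) mod n" by (simp add: mod_add_right_eq)
  also have "i + (j + n - i) = j + n" using a by simp
  finally show ?thesis using a by simp
qed

lemma cycle_two_paths:
  assumes C: "is_cycle V E c" and i: "i < length c" and j: "j < length c" and ij: "i \<noteq> j"
  shows "\<exists>R1 R2. is_path V E R1 \<and> hd R1 = c ! i \<and> last R1 = c ! j \<and>
     is_path V E R2 \<and> hd R2 = c ! i \<and> last R2 = c ! j \<and>
     length R1 + length R2 = length c + 2 \<and> set R1 \<subseteq> set c \<and> set R2 \<subseteq> set c \<and>
     (set R1 - {c ! i, c ! j}) \<inter> (set R2 - {c ! i, c ! j}) = {} \<and>
     length R1 = Suc ((j + length c - i) mod length c)"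
proof -
  define n where "n = length c"
  define c' where "c' = rotate i c"
  define d where "d = (j + n - i) mod n"
  have C': "is_cycle V E c'" unfolding c'_def by (rule cycle_rotate[OF C])
  have ln: "length c' = n" unfolding c'_def n_def by simp
  have sc: "set c' = set c" unfolding c'_def by simp
  have n0: "0 < n" using i unfolding n_def by (cases c) auto
  have c'0: "c' ! 0 = c ! i" unfolding c'_def using nth_rotate[of 0 c i] i n0 unfolding n_def by simp
  have dn: "d < n" unfolding d_def using n0 by simp
  have c'd: "c' ! d = c ! j" unfolding c'_def using nth_rotate[of d c i] dn mod_back[of i n j] i j
    unfolding n_def d_def by simp
  have dc: "distinct c" using C unfolding is_cycle_def is_path_def by simp
  have d0: "0 < d"
  proof (rule ccontr)
    assume "\<not> 0 < d"
    then have "d = 0" by simp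
    then have "c ! i = c ! j" using c'0 c'd by simp
    then show False using dc i j ij by (simp add: nth_eq_iff_index_eq)
  qed
  note A = cycle_arcs[OF C' d0 dn[folded ln]]
  show ?thesis
    apply (rule exI[of _ "take (Suc d) c'"], rule exI[of _ "c' ! 0 # rev (drop d c')"])
    using A c'0 c'd sc ln dn unfolding d_def n_def by simp
qed


lemma pair_pick:
  assumes L: "linkage V E A B k P" and pa: "pa \<in> P" and pb: "pb \<in> P" and ne: "pa \<noteq> pb"
    and ja: "c ! ja = last pa" "ja < length c" and jb: "c ! jb = last pb" "jb < length c"
    and ev: "even (ja + jb)"
  shows "\<exists>p q i j. p \<in> P \<and> q \<in> P \<and> p \<noteq> q \<and> i < j \<and> j < length c \<and> even (j - i) \<and>
     c ! i = last p \<and> c ! j = last q"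
proof -
  have "set pa \<inter> set pb = {}" using L pa pb ne unfolding linkage_def by blast
  moreover have "pa \<noteq> []" "pb \<noteq> []" using L pa pb unfolding linkage_def cpath_def is_path_def by auto
  ultimately have "last pa \<noteq> last pb" by (metis disjoint_iff last_in_set)
  then have "ja \<noteq> jb" using ja jb by metis
  then consider "ja < jb" | "jb < ja" by linarith
  then show ?thesis
  proof cases
    case 1
    have "even (jb - ja)" using ev 1 by (metis add_diff_cancel_left' dvd_diff_nat even_add less_imp_le_nat le_add_diff_inverse)
    then show ?thesis using 1 pa pb ne ja jb by blast
  next
    case 2
    have "even (ja - jb)" using ev 2 by (metis add_diff_cancel_left' dvd_diff_nat even_add less_imp_le_nat le_add_diff_inverse)
    then show ?thesis using 2 pa pb ne ja jb by blast
  qed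
qed

theorem lemma3p3:
  fixes V :: "'a set" and E :: "'a set set"
  assumes "graph V E"
    and "three_connected V E"
    and "has_mixed_bicycle V E"
  shows "K23_based V E"
proof -
  note G = assms(1) and T = assms(2)
  obtain Qo Qe where mb: "mixed_bicycle V E Qo Qe" using assms(3) unfolding has_mixed_bicycle_def by blast
  have co: "is_cycle V E Qo" and ce: "is_cycle V E Qe" and dj: "set Qo \<inter> set Qe = {}"
    and oo: "odd (length Qo)" and ee: "even (length Qe)" and le4: "length Qe \<ge> 4"
    using mb unfolding mixed_bicycle_def by auto
  define A where "A = set Qo"
  define B where "B = set Qe"
  have Qo: "distinct Qo" "length Qo \<ge> 3" "set Qo \<subseteq> V" using co unfolding is_cycle_def is_path_def by auto
  have Qe: "distinct Qe" "length Qe \<ge> 3" "set Qe \<subseteq> V" using ce unfolding is_cycle_def is_path_def by auto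
  have cA: "card A = length Qo" unfolding A_def using Qo(1) by (simp add: distinct_card)
  have cB: "card B = length Qe" unfolding B_def using Qe(1) by (simp add: distinct_card)
  have finV: "finite V" using G unfolding graph_def by simp
  have AB: "A \<inter> B = {}" using dj unfolding A_def B_def .
  have sep: "\<forall>S\<subseteq>V. sepw V E A B S \<longrightarrow> 3 \<le> card S"
  proof (intro allI impI)
    fix S assume S: "S \<subseteq> V" "sepw V E A B S"
    show "3 \<le> card S"
    proof (rule ccontr)
      assume "\<not> 3 \<le> card S"
      then have cS: "card S < 3" by simp
      have conn: "connected_on V E (V - S)" using T S(1) cS unfolding three_connected_def by blast
      have finS: "finite S" by (rule finite_subset[OF S(1) finV])
      have "\<not> A \<subseteq> S"
      proof
        assume "A \<subseteq> S"
        then have "card A \<le> card S" using finS by (simp add: card_mono)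
        then show False using cA Qo(2) cS by simp
      qed
      then obtain a where a: "a \<in> A" "a \<notin> S" by blast
      have "\<not> B \<subseteq> S"
      proof
        assume "B \<subseteq> S"
        then have "card B \<le> card S" using finS by (simp add: card_mono)
        then show False using cB Qe(2) cS by simp
      qed
      then obtain b where b: "b \<in> B" "b \<notin> S" by blast
      have "a \<in> V - S" "b \<in> V - S" using a b Qo(3) Qe(3) unfolding A_def B_def by auto
      then obtain p where p: "is_path V E p" "set p \<subseteq> V - S" "hd p = a" "last p = b"
        using conn unfolding connected_on_def by blast
      have "walk V E p" using p(1) unfolding walk_def is_path_adjl by simp
      moreover have "set p \<inter> S = {}" using p(2) by blast
      ultimately show False using S(2) p(3,4) a(1) b(1) unfolding sepw_def by blast
    qed
  qed
  obtain P where L: "linkage V E A B 3 P" using menger[OF G sep] by blast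
  have "card P = 3" using L unfolding linkage_def by simp
  then obtain p1 p2 p3 where P3: "P = {p1, p2, p3}" "p1 \<noteq> p2" "p2 \<noteq> p3" "p1 \<noteq> p3"
    by (auto simp: card_3_iff)
  have cpP: "cpath V E A B p" if "p \<in> P" for p using L that unfolding linkage_def by blast
  have lB: "last p \<in> B" if "p \<in> P" for p using cpP[OF that] unfolding cpath_def by blast
  have idx: "\<exists>j. j < length Qe \<and> Qe ! j = last p" if "p \<in> P" for p
    using lB[OF that] unfolding B_def by (metis in_set_conv_nth)
  have p123: "p1 \<in> P" "p2 \<in> P" "p3 \<in> P" using P3 by auto
  obtain j1 where j1: "j1 < length Qe" "Qe ! j1 = last p1" using idx[OF p123(1)] by blast
  obtain j2 where j2: "j2 < length Qe" "Qe ! j2 = last p2" using idx[OF p123(2)] by blast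
  obtain j3 where j3: "j3 < length Qe" "Qe ! j3 = last p3" using idx[OF p123(3)] by blast
  have "even (j1 + j2) \<or> even (j1 + j3) \<or> even (j2 + j3)" by presburger
  then have "\<exists>p q i j. p \<in> P \<and> q \<in> P \<and> p \<noteq> q \<and> i < j \<and> j < length Qe \<and> even (j - i) \<and>
     Qe ! i = last p \<and> Qe ! j = last q"
  proof (elim disjE)
    assume "even (j1 + j2)"
    then show ?thesis using pair_pick[OF L p123(1) p123(2) P3(2) j1(2,1) j2(2,1)] by blast
  next
    assume "even (j1 + j3)"
    then show ?thesis using pair_pick[OF L p123(1) p123(3) P3(4) j1(2,1) j3(2,1)] by blast
  next
    assume "even (j2 + j3)"
    then show ?thesis using pair_pick[OF L p123(2) p123(3) P3(3) j2(2,1) j3(2,1)] by blast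
  qed
  then obtain p q i j where pq: "p \<in> P" "q \<in> P" "p \<noteq> q" "i < j" "j < length Qe" "even (j - i)"
    "Qe ! i = last p" "Qe ! j = last q" by blast
  define u where "u = Qe ! i"
  define w where "w = Qe ! j"
  have uw: "u \<noteq> w" using Qe(1) pq(4,5) unfolding u_def w_def by (simp add: nth_eq_iff_index_eq)
  have cp: "cpath V E A B p" and cq: "cpath V E A B q" using cpP pq(1,2) by auto
  have pqd: "set p \<inter> set q = {}" using L pq(1-3) unfolding linkage_def by blast
  have pP: "is_path V E p" "hd p \<in> A" "last p = u" "\<forall>v\<in>set p. v \<in> A \<longrightarrow> v = hd p" "\<forall>v\<in>set p. v \<in> B \<longrightarrow> v = last p"
    using cp pq(7) unfolding cpath_def u_def by auto
  have qP: "is_path V E q" "hd q \<in> A" "last q = w" "\<forall>v\<in>set q. v \<in> A \<longrightarrow> v = hd q" "\<forall>v\<in>set q. v \<in> B \<longrightarrow> v = last q"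
    using cq pq(8) unfolding cpath_def w_def by auto
  have pne: "p \<noteq> []" and qne: "q \<noteq> []" using pP(1) qP(1) unfolding is_path_def by auto
  have ij: "i \<noteq> j" "i < length Qe" using pq(4,5) by auto
  obtain R2 R3 where R: "is_path V E R2" "hd R2 = u" "last R2 = w" "is_path V E R3" "hd R3 = u" "last R3 = w"
     "length R2 + length R3 = length Qe + 2" "set R2 \<subseteq> B" "set R3 \<subseteq> B"
     "(set R2 - {u, w}) \<inter> (set R3 - {u, w}) = {}"
     "length R2 = Suc ((j + length Qe - i) mod length Qe)"
    using cycle_two_paths[OF ce ij(2) pq(5) ij(1)] unfolding u_def w_def B_def by blast
  have "(j + length Qe - i) mod length Qe = j - i"
  proof -
    have e1: "j + length Qe - i = (j - i) + length Qe" using pq(4) by simp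
    have e2: "((j - i) + length Qe) mod length Qe = (j - i) mod length Qe" by (rule mod_add_self2)
    have e3: "(j - i) mod length Qe = j - i" using pq(4,5) by simp
    show ?thesis unfolding e1 e2 e3 ..
  qed
  then have lR2: "length R2 = Suc (j - i)" using R(11) by simp
  have oR2: "odd (length R2)" using lR2 pq(6) by simp
  have oR3: "odd (length R3)"
  proof -
    have "length R3 = length Qe + 1 - (j - i)" using R(7) lR2 by simp
    moreover have "j - i \<le> length Qe" using pq(5) by simp
    ultimately show ?thesis using ee pq(6) by simp
  qed
  define x where "x = hd p"
  define y where "y = hd q"
  have xy: "x \<noteq> y" using pqd pne qne unfolding x_def y_def by (metis disjoint_iff hd_in_set)
  obtain ix where ix: "ix < length Qo" "Qo ! ix = x" using pP(2) unfolding x_def A_def by (metis in_set_conv_nth)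
  obtain iy where iy: "iy < length Qo" "Qo ! iy = y" using qP(2) unfolding y_def A_def by (metis in_set_conv_nth)
  have ixy: "ix \<noteq> iy" using ix iy xy by auto
  obtain T1 T2 where TT: "is_path V E T1" "hd T1 = x" "last T1 = y" "is_path V E T2" "hd T2 = x" "last T2 = y"
     "length T1 + length T2 = length Qo + 2" "set T1 \<subseteq> A" "set T2 \<subseteq> A"
    using cycle_two_paths[OF co ix(1) iy(1) ixy] unfolding ix(2) iy(2) A_def by blast
  have "\<exists>Tp. is_path V E Tp \<and> hd Tp = x \<and> last Tp = y \<and> set Tp \<subseteq> A \<and> odd (length p + length Tp + length q)"
  proof (cases "odd (length p + length T1 + length q)")
    case True then show ?thesis using TT by blast
  next
    case False
    then have "odd (length p + length T2 + length q)" using TT(7) oo by presburger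
    then show ?thesis using TT by blast
  qed
  then obtain Tp where Tp: "is_path V E Tp" "hd Tp = x" "last Tp = y" "set Tp \<subseteq> A" "odd (length p + length Tp + length q)"
    by blast
  have Tne: "Tp \<noteq> []" using Tp(1) unfolding is_path_def by simp
  define p' where "p' = rev p"
  have p'P: "is_path V E p'" using pP(1) unfolding p'_def is_path_adjl by (simp add: adjl_rev)
  have p'h: "hd p' = u" "last p' = x" using pP(3) pne unfolding p'_def x_def by (auto simp: hd_rev last_rev)
  have p'ne: "p' \<noteq> []" using pne unfolding p'_def by simp
  have sp': "set p' = set p" unfolding p'_def by simp
  define J1 where "J1 = jn p' Tp"
  have lh1: "last p' = hd Tp" using p'h Tp(2) by simp
  have J1s: "set J1 = set p \<union> set Tp" unfolding J1_def using jn_set[OF p'ne Tne lh1] sp' by simp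
  have J1ne: "J1 \<noteq> []" unfolding J1_def jn_def using p'ne by simp
  have J1h: "hd J1 = u" unfolding J1_def using jn_hd[OF p'ne] p'h by simp
  have J1l: "last J1 = y" unfolding J1_def using jn_last[OF p'ne Tne lh1] Tp(3) by simp
  have J1len: "length J1 = length p + length Tp - 1" unfolding J1_def using jn_length[OF Tne] p'_def by simp
  have "set p' \<inter> set Tp \<subseteq> {hd Tp}"
  proof
    fix v assume v: "v \<in> set p' \<inter> set Tp"
    then have "v \<in> A" using Tp(4) by blast
    then have "v = hd p" using pP(4) v sp' by blast
    then show "v \<in> {hd Tp}" using Tp(2) unfolding x_def by simp
  qed
  then have J1d: "distinct J1" unfolding J1_def
    using jn_distinct[OF p'ne Tne lh1] p'P Tp(1) unfolding is_path_def by blast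
  have J1a: "adjl E J1" unfolding J1_def using jn_adjl[OF p'ne lh1] p'P Tp(1) unfolding is_path_adjl by blast
  define R4 where "R4 = jn J1 q"
  have lh2: "last J1 = hd q" using J1l unfolding y_def by simp
  have R4s: "set R4 = set p \<union> set Tp \<union> set q" unfolding R4_def using jn_set[OF J1ne qne lh2] J1s by simp
  have R4h: "hd R4 = u" unfolding R4_def using jn_hd[OF J1ne] J1h by simp
  have R4l: "last R4 = w" unfolding R4_def using jn_last[OF J1ne qne lh2] qP(3) by simp
  have R4len: "length R4 = length J1 + length q - 1" unfolding R4_def using jn_length[OF qne] by simp
  have "set J1 \<inter> set q \<subseteq> {hd q}"
  proof
    fix v assume v: "v \<in> set J1 \<inter> set q"
    then have "v \<in> set Tp" using J1s pqd by blast
    then have "v \<in> A" using Tp(4) by blast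
    then show "v \<in> {hd q}" using qP(4) v by blast
  qed
  then have R4d: "distinct R4" unfolding R4_def
    using jn_distinct[OF J1ne qne lh2] J1d qP(1) unfolding is_path_def by blast
  have R4a: "adjl E R4" unfolding R4_def using jn_adjl[OF J1ne lh2 J1a] qP(1) unfolding is_path_adjl by blast
  have R4V: "set R4 \<subseteq> V" using R4s pP(1) qP(1) Tp(1) unfolding is_path_def by blast
  have R4P: "is_path V E R4" using R4d R4a R4V unfolding is_path_adjl R4_def jn_def using J1ne by simp
  have oR4: "odd (length R4)"
  proof -
    have "length p \<ge> 1" "length Tp \<ge> 1" "length q \<ge> 1" using pne Tne qne by (auto simp: Suc_le_eq)
    then have "length R4 + 2 = length p + length Tp + length q" using R4len J1len by simp
    then show ?thesis using Tp(5) by presburger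
  qed
  have R4B: "set R4 \<inter> B \<subseteq> {u, w}"
  proof
    fix v assume v: "v \<in> set R4 \<inter> B"
    then have "v \<in> set p \<or> v \<in> set Tp \<or> v \<in> set q" using R4s by blast
    moreover have "v \<notin> set Tp" using v Tp(4) AB by blast
    ultimately show "v \<in> {u, w}" using v pP(3,5) qP(3,5) by blast
  qed
  define R where "R k = (if k = (2::nat) then R2 else if k = 3 then R3 else R4)" for k
  show ?thesis
  proof (rule theta_K23[where R=R and u=u and w=w])
    show "u \<noteq> w" by (rule uw)
    show "is_path V E (R k) \<and> hd (R k) = u \<and> last (R k) = w \<and> odd (length (R k))" if "k \<in> {2,3,4}" for k
      using that R oR2 oR3 R4P R4h R4l oR4 unfolding R_def by auto
    show "(set (R a) - {u, w}) \<inter> (set (R b) - {u, w}) = {}" if "a \<in> {2,3,4}" "b \<in> {2,3,4}" "a \<noteq> b" for a b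
    proof -
      have d23: "(set R2 - {u, w}) \<inter> (set R3 - {u, w}) = {}" by (rule R(10))
      have d24: "(set R2 - {u, w}) \<inter> (set R4 - {u, w}) = {}" using R(8) R4B by blast
      have d34: "(set R3 - {u, w}) \<inter> (set R4 - {u, w}) = {}" using R(9) R4B by blast
      show ?thesis using that d23 d24 d34 unfolding R_def by auto
    qed
  qed
qed


end
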